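(* Let $\mathcal{A}\in\mathbb{R}^{n\times n\times n\times n}$ be a real symmetric tensor. Then $\mathcal{A}(x,x,x,x)=\sum_{i,j,k,l}\mathcal{A}_{ijkl}x_ix_jx_kx_l\ge0$ for all $x\in\mathbb{R}^n$ if and only if $\sum_{i,j,k,l}\mathcal{A}_{ijkl}X_{ij}X_{kl}\ge 0$ for all real symmetric positive semidefinite $X\in\mathbb{R}^{n\times n}$.
   Context: A tensor is symmetric if its entries $\mathcal{A}_{ijkl}$ are invariant under all permutations of $(i,j,k,l)$. *)

theory Defs
  imports "HOL-Analysis.Analysis" "HOL-Combinatorics.Permutations"
begin

definition symmetric_tensor4 :: "real^'n^'n^'n^'n \<Rightarrow> bool" where
  "symmetric_tensor4 A \<longleftrightarrow>
     (\<forall>p idx. p permutes {0..<(4::nat)} \<longrightarrow>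
        A $ idx 0 $ idx 1 $ idx 2 $ idx 3
        = A $ idx (p 0) $ idx (p 1) $ idx (p 2) $ idx (p 3))"

definition tensor4_form :: "real^'n^'n^'n^'n \<Rightarrow> real^'n \<Rightarrow> real" where
  "tensor4_form A x = (\<Sum>i\<in>UNIV. \<Sum>j\<in>UNIV. \<Sum>k\<in>UNIV. \<Sum>l\<in>UNIV.
      A $ i $ j $ k $ l * x $ i * x $ j * x $ k * x $ l)"

definition tensor4_matrix_form :: "real^'n^'n^'n^'n \<Rightarrow> real^'n^'n \<Rightarrow> real" where
  "tensor4_matrix_form A X = (\<Sum>i\<in>UNIV. \<Sum>j\<in>UNIV. \<Sum>k\<in>UNIV. \<Sum>l\<in>UNIV.
      A $ i $ j $ k $ l * X $ i $ j * X $ k $ l)"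

definition sym_psd :: "real^'n^'n \<Rightarrow> bool" where
  "sym_psd X \<longleftrightarrow> transpose X = X \<and> (\<forall>v. 0 \<le> v \<bullet> (X *v v))"

end

theory Submission
  imports Defs
begin


lemma sym_perm:
  assumes "symmetric_tensor4 A" "p permutes {0..<(4::nat)}"
  shows "A $ idx 0 $ idx 1 $ idx 2 $ idx 3 = A $ idx (p 0) $ idx (p 1) $ idx (p 2) $ idx (p 3)"
  using assms unfolding symmetric_tensor4_def by blast

lemma sw01: assumes "symmetric_tensor4 A" shows "A$i$j$k$l = A$j$i$k$l"
  using sym_perm[OF assms permutes_swap_id[of 0 "{0..<4}" 1], of "\<lambda>m. [i,j,k,l]!m"]
  by (simp add: transpose_def)
lemma sw12: assumes "symmetric_tensor4 A" shows "A$i$j$k$l = A$i$k$j$l"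
  using sym_perm[OF assms permutes_swap_id[of 1 "{0..<4}" 2], of "\<lambda>m. [i,j,k,l]!m"]
  by (simp add: transpose_def)
lemma sw23: assumes "symmetric_tensor4 A" shows "A$i$j$k$l = A$i$j$l$k"
  using sym_perm[OF assms permutes_swap_id[of 2 "{0..<4}" 3], of "\<lambda>m. [i,j,k,l]!m"]
  by (simp add: transpose_def)

definition T :: "real^'n^'n^'n^'n \<Rightarrow> real^'n \<Rightarrow> real^'n \<Rightarrow> real^'n \<Rightarrow> real^'n \<Rightarrow> real" where
  "T A a b c d = (\<Sum>i\<in>UNIV. \<Sum>j\<in>UNIV. \<Sum>k\<in>UNIV. \<Sum>l\<in>UNIV.
      A $ i $ j $ k $ l * a $ i * b $ j * c $ k * d $ l)"

definition B :: "real^'n^'n^'n^'n \<Rightarrow> real^'n^'n \<Rightarrow> real^'n^'n \<Rightarrow> real" where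
  "B A X Y = (\<Sum>i\<in>UNIV. \<Sum>j\<in>UNIV. \<Sum>k\<in>UNIV. \<Sum>l\<in>UNIV.
      A $ i $ j $ k $ l * X $ i $ j * Y $ k $ l)"

definition outer :: "real^'n \<Rightarrow> real^'n \<Rightarrow> real^'n^'n" where
  "outer a b = (\<chi> i j. a$i * b$j)"

lemma T01: assumes "symmetric_tensor4 A" shows "T A a b c d = T A b a c d"
proof -
  have "T A a b c d = (\<Sum>i\<in>UNIV. \<Sum>j\<in>UNIV. \<Sum>k\<in>UNIV. \<Sum>l\<in>UNIV.
      A $ j $ i $ k $ l * a $ i * b $ j * c $ k * d $ l)"
    unfolding T_def by (subst sw01[OF assms]) (rule refl)
  also have "\<dots> = (\<Sum>j\<in>UNIV. \<Sum>i\<in>UNIV. \<Sum>k\<in>UNIV. \<Sum>l\<in>UNIV.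
      A $ j $ i $ k $ l * a $ i * b $ j * c $ k * d $ l)"
    by (rule sum.swap)
  also have "\<dots> = T A b a c d" unfolding T_def by (simp add: ac_simps)
  finally show ?thesis .
qed

lemma T12: assumes "symmetric_tensor4 A" shows "T A a b c d = T A a c b d"
proof -
  have "T A a b c d = (\<Sum>i\<in>UNIV. \<Sum>j\<in>UNIV. \<Sum>k\<in>UNIV. \<Sum>l\<in>UNIV.
      A $ i $ k $ j $ l * a $ i * b $ j * c $ k * d $ l)"
    unfolding T_def by (subst sw12[OF assms]) (rule refl)
  also have "\<dots> = (\<Sum>i\<in>UNIV. \<Sum>k\<in>UNIV. \<Sum>j\<in>UNIV. \<Sum>l\<in>UNIV.
      A $ i $ k $ j $ l * a $ i * b $ j * c $ k * d $ l)"
    by (rule sum.cong[OF refl], rule sum.swap)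
  also have "\<dots> = T A a c b d" unfolding T_def by (intro sum.cong refl) (simp add: ac_simps)
  finally show ?thesis .
qed

lemma T23: assumes "symmetric_tensor4 A" shows "T A a b c d = T A a b d c"
proof -
  have "T A a b c d = (\<Sum>i\<in>UNIV. \<Sum>j\<in>UNIV. \<Sum>k\<in>UNIV. \<Sum>l\<in>UNIV.
      A $ i $ j $ l $ k * a $ i * b $ j * c $ k * d $ l)"
    unfolding T_def by (subst sw23[OF assms]) (rule refl)
  also have "\<dots> = (\<Sum>i\<in>UNIV. \<Sum>j\<in>UNIV. \<Sum>l\<in>UNIV. \<Sum>k\<in>UNIV.
      A $ i $ j $ l $ k * a $ i * b $ j * c $ k * d $ l)"
    by (rule sum.cong[OF refl], rule sum.cong[OF refl], rule sum.swap)
  also have "\<dots> = T A a b d c" unfolding T_def by (intro sum.cong refl) (simp add: ac_simps)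
  finally show ?thesis .
qed

lemma sum4_swap:
  "(\<Sum>i\<in>I. \<Sum>j\<in>J. \<Sum>k\<in>K. \<Sum>l\<in>L. (F i j k l::real))
   = (\<Sum>k\<in>K. \<Sum>l\<in>L. \<Sum>i\<in>I. \<Sum>j\<in>J. F i j k l)"
proof -
  have "(\<Sum>i\<in>I. \<Sum>j\<in>J. \<Sum>k\<in>K. \<Sum>l\<in>L. F i j k l)
      = (\<Sum>i\<in>I. \<Sum>k\<in>K. \<Sum>j\<in>J. \<Sum>l\<in>L. F i j k l)"
    by (rule sum.cong[OF refl], rule sum.swap)
  also have "\<dots> = (\<Sum>k\<in>K. \<Sum>i\<in>I. \<Sum>j\<in>J. \<Sum>l\<in>L. F i j k l)"
    by (rule sum.swap)
  also have "\<dots> = (\<Sum>k\<in>K. \<Sum>i\<in>I. \<Sum>l\<in>L. \<Sum>j\<in>J. F i j k l)"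
    by (rule sum.cong[OF refl], rule sum.cong[OF refl], rule sum.swap)
  also have "\<dots> = (\<Sum>k\<in>K. \<Sum>l\<in>L. \<Sum>i\<in>I. \<Sum>j\<in>J. F i j k l)"
    by (rule sum.cong[OF refl], rule sum.swap)
  finally show ?thesis .
qed

lemma sw_pairs: assumes "symmetric_tensor4 A" shows "A$k$l$i$j = A$i$j$k$l"
  by (metis sw01[OF assms] sw12[OF assms] sw23[OF assms])

lemma B_sym: assumes "symmetric_tensor4 A" shows "B A X Y = B A Y X"
proof -
  have "B A X Y = (\<Sum>k\<in>UNIV. \<Sum>l\<in>UNIV. \<Sum>i\<in>UNIV. \<Sum>j\<in>UNIV.
      A $ i $ j $ k $ l * X $ i $ j * Y $ k $ l)"
    unfolding B_def by (rule sum4_swap)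
  also have "\<dots> = B A Y X" unfolding B_def
    by (intro sum.cong refl) (simp add: sw_pairs[OF assms] ac_simps)
  finally show ?thesis .
qed

lemma T_add:
  "T A (a+a') b c d = T A a b c d + T A a' b c d"
  "T A a (b+b') c d = T A a b c d + T A a b' c d"
  "T A a b (c+c') d = T A a b c d + T A a b c' d"
  "T A a b c (d+d') = T A a b c d + T A a b c d'"
  unfolding T_def by (simp_all add: sum.distrib[symmetric] algebra_simps)

lemma T_neg:
  "T A (-a) b c d = - T A a b c d"
  "T A a (-b) c d = - T A a b c d"
  "T A a b (-c) d = - T A a b c d"
  "T A a b c (-d) = - T A a b c d"
  unfolding T_def by (simp_all add: sum_negf[symmetric])

lemma B_add1: "B A (X+X') Y = B A X Y + B A X' Y"
  unfolding B_def by (simp add: sum.distrib[symmetric] algebra_simps)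
lemma B_add2: "B A Y (X+X') = B A Y X + B A Y X'"
  unfolding B_def by (simp add: sum.distrib[symmetric] algebra_simps)

lemma B_outer: "B A (outer a b) (outer c d) = T A a b c d"
  unfolding B_def T_def outer_def by (simp add: ac_simps)

lemma outer_pm: "B A (outer (w+v) (w+v)) X + B A (outer (w-v) (w-v)) X
   = 2 * B A (outer w w) X + 2 * B A (outer v v) X"
  unfolding B_def outer_def by (simp add: sum.distrib[symmetric] sum_distrib_left algebra_simps)

lemma form_T: "tensor4_form A x = T A x x x x"
  unfolding tensor4_form_def T_def ..
lemma mform_B: "tensor4_matrix_form A X = B A X X"
  unfolding tensor4_matrix_form_def B_def ..



lemma psd_sym_entry: "sym_psd X \<Longrightarrow> X$b$a = X$a$b"
  unfolding sym_psd_def by (metis transpose_def vec_lambda_beta)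

lemma outer_mv: "outer a b *v y = (b \<bullet> y) *\<^sub>R a"
  unfolding outer_def by (simp add: vec_eq_iff matrix_vector_mult_def inner_vec_def sum_distrib_left ac_simps)

lemma inner_Xaxis: "y \<bullet> (X *v axis i 1) = (\<Sum>k\<in>UNIV. X$k$i * y$k)"
  by (simp add: inner_vec_def matrix_vector_mult_def axis_def ac_simps if_distrib cong: if_cong)

lemma axis_inner_X: "axis i 1 \<bullet> (X *v y) = (\<Sum>k\<in>UNIV. X$i$k * y$k)"
  by (simp add: inner_axis' matrix_vector_mult_def)

lemma CS:
  assumes "sym_psd X"
  shows "(\<Sum>k\<in>UNIV. X$k$i * y$k)^2 \<le> X$i$i * (y \<bullet> (X *v y))"
proof -
  define c where "c = (\<Sum>k\<in>UNIV. X$k$i * y$k)"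
  define d where "d = X$i$i"
  define q where "q = y \<bullet> (X *v y)"
  define e where "e = (axis i 1 :: real^_)"
  have psd: "\<And>v. 0 \<le> v \<bullet> (X *v v)" using assms unfolding sym_psd_def by blast
  have c2: "e \<bullet> (X *v y) = c"
    unfolding e_def c_def axis_inner_X by (simp add: psd_sym_entry[OF assms])
  have c1: "y \<bullet> (X *v e) = c" unfolding e_def c_def inner_Xaxis ..
  have de: "e \<bullet> (X *v e) = d" unfolding e_def d_def axis_inner_X
    by (simp add: axis_def if_distrib cong: if_cong)
  have key: "\<And>t. 0 \<le> q + 2 * t * c + t^2 * d"
  proof -
    fix t
    have "(y + t *\<^sub>R e) \<bullet> (X *v (y + t *\<^sub>R e)) = q + 2 * t * c + t^2 * d"
      by (simp add: matrix_vector_right_distrib matrix_vector_mult_scaleR inner_add_left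
          inner_add_right c1 c2 de q_def power2_eq_square algebra_simps)
    then show "0 \<le> q + 2 * t * c + t^2 * d" using psd by metis
  qed
  have d0: "0 \<le> d" using psd[of e] de by simp
  have "c^2 \<le> d * q"
  proof (cases "d = 0")
    case True
    show ?thesis
    proof (rule ccontr)
      assume "\<not> ?thesis"
      then have "c \<noteq> 0" using True by auto
      have "0 \<le> q + 2 * (-(\<bar>q\<bar>+1)/(2*c)) * c + (-(\<bar>q\<bar>+1)/(2*c))^2 * d" by (rule key)
      also have "\<dots> = q - (\<bar>q\<bar>+1)" using True \<open>c \<noteq> 0\<close> by (simp add: field_simps)
      finally show False by linarith
    qed
  next
    case False
    then have dp: "d > 0" using d0 by simp
    have "0 \<le> q + 2 * (-c/d) * c + (-c/d)^2 * d" by (rule key)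
    also have "\<dots> = q - c^2/d" using dp by (simp add: field_simps power2_eq_square)
    finally have "c^2/d \<le> q" by simp
    then show ?thesis using dp by (simp add: field_simps mult.commute)
  qed
  then show ?thesis unfolding c_def d_def q_def .
qed

lemma psd_zero_diag:
  assumes "sym_psd X" "X$j$j = 0" shows "X$a$j = 0"
proof -
  have "(\<Sum>k\<in>UNIV. X$k$j * (axis a 1 :: real^_)$k)^2 \<le> 0"
    using CS[OF assms(1), of j "axis a 1"] assms(2) by simp
  moreover have "(\<Sum>k\<in>UNIV. X$k$j * (axis a 1 :: real^_)$k) = X$a$j"
    by (simp add: axis_def if_distrib cong: if_cong)
  ultimately show ?thesis by simp
qed



lemma psd_step:
  assumes X: "sym_psd X" and i: "X$i$i \<noteq> 0"
  shows "\<exists>v X'. X = outer v v + X' \<and> sym_psd X' \<and> {j. X'$j$j \<noteq> 0} \<subset> {j. X$j$j \<noteq> 0}"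
proof -
  define d where "d = X$i$i"
  have psd: "\<And>v. 0 \<le> v \<bullet> (X *v v)" using X unfolding sym_psd_def by blast
  have "0 \<le> d" using psd[of "axis i 1"] unfolding d_def axis_inner_X
    by (simp add: axis_def if_distrib cong: if_cong)
  with i have dp: "d > 0" unfolding d_def by simp
  define v :: "real^'a" where "v = (\<chi> k. X$k$i / sqrt d)"
  define X' where "X' = X - outer v v"
  have ov: "\<And>a b. outer v v $a$b = X$a$i * X$b$i / d"
    unfolding outer_def v_def using dp by (simp add: field_simps real_sqrt_mult[symmetric])
  have tX': "transpose X' = X'"
    unfolding X'_def by (simp add: vec_eq_iff transpose_def ov psd_sym_entry[OF X] mult.commute)
  have "\<And>y. 0 \<le> y \<bullet> (X' *v y)"
  proof -
    fix y
    define c where "c = (\<Sum>k\<in>UNIV. X$k$i * y$k)"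
    have vy: "v \<bullet> y = c / sqrt d"
      unfolding v_def c_def inner_vec_def by (simp add: sum_divide_distrib)
    have 1: "y \<bullet> (X' *v y) = y \<bullet> (X *v y) - (v \<bullet> y)^2"
      unfolding X'_def by (simp add: matrix_vector_mult_diff_rdistrib outer_mv inner_diff_right
          power2_eq_square inner_commute)
    have 2: "(v \<bullet> y)^2 = c^2 / d" using dp by (simp add: vy power_divide)
    have 3: "c^2 / d \<le> y \<bullet> (X *v y)"
      using CS[OF X, of i y] dp unfolding c_def d_def by (simp add: divide_le_eq mult.commute)
    show "0 \<le> y \<bullet> (X' *v y)" using 1 2 3 by linarith
  qed
  then have psd': "sym_psd X'" using tX' unfolding sym_psd_def by blast
  have "X'$i$i = 0" unfolding X'_def using dp by (simp add: ov d_def power2_eq_square)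
  moreover have "\<And>j. X$j$j = 0 \<Longrightarrow> X'$j$j = 0"
    unfolding X'_def by (simp add: ov psd_zero_diag[OF X] psd_sym_entry[OF X, of _ i])
  ultimately have "{j. X'$j$j \<noteq> 0} \<subset> {j. X$j$j \<noteq> 0}" using i by blast
  moreover have "X = outer v v + X'" unfolding X'_def by simp
  ultimately show ?thesis using psd' by blast
qed

lemma Tpm:
  assumes S: "symmetric_tensor4 A"
  shows "T A (w+v) (w+v) (w+v) (w+v) + T A (w-v) (w-v) (w-v) (w-v)
       = 2 * T A w w w w + 2 * T A v v v v + 12 * T A w w v v"
proof -
  have e1: "T A w v w v = T A w w v v" using T12[OF S] by metis
  have e2: "T A w v v w = T A w w v v" using T12[OF S] T23[OF S] by metis
  have e3: "T A v w w v = T A w w v v" using T01[OF S] T12[OF S] T23[OF S] by metis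
  have e4: "T A v w v w = T A w w v v" using T01[OF S] T12[OF S] T23[OF S] by metis
  have e5: "T A v v w w = T A w w v v" using T01[OF S] T12[OF S] T23[OF S] by metis
  show ?thesis unfolding diff_conv_add_uminus
    by (simp only: T_add T_neg e1 e2 e3 e4 e5)
qed

definition FF where "FF A w X = T A w w w w + 6 * B A (outer w w) X + 3 * B A X X"

lemma B_zero: "B A X 0 = 0" "B A 0 X = 0" unfolding B_def by simp_all

lemma F_nonneg:
  assumes S: "symmetric_tensor4 A" and P: "\<forall>x. 0 \<le> T A x x x x"
  shows "sym_psd X \<Longrightarrow> 0 \<le> FF A w X"
proof (induct "card {j. X$j$j \<noteq> 0}" arbitrary: X w rule: less_induct)
  case less
  show ?case
  proof (cases "\<exists>i. X$i$i \<noteq> 0")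
    case False
    then have "X = 0" using psd_zero_diag[OF less.prems] by (simp add: vec_eq_iff)
    then show ?thesis unfolding FF_def using P by (simp add: B_zero)
  next
    case True
    then obtain i where "X$i$i \<noteq> 0" by blast
    from psd_step[OF less.prems this] obtain v X' where
      dec: "X = outer v v + X'" and p': "sym_psd X'" and sub: "{j. X'$j$j \<noteq> 0} \<subset> {j. X$j$j \<noteq> 0}"
      by blast
    have lt: "card {j. X'$j$j \<noteq> 0} < card {j. X$j$j \<noteq> 0}"
      by (rule psubset_card_mono[OF _ sub]) simp
    have h1: "0 \<le> FF A (w+v) X'" using less.hyps[OF lt p'] .
    have h2: "0 \<le> FF A (w-v) X'" using less.hyps[OF lt p'] .
    have pv: "0 \<le> T A v v v v" using P by blast
    have b1: "B A (outer w w) X = T A w w v v + B A (outer w w) X'"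
      unfolding dec B_add2 B_outer ..
    have b2: "B A X X = T A v v v v + 2 * B A (outer v v) X' + B A X' X'"
      unfolding dec B_add1 B_add2 B_outer using B_sym[OF S, of X' "outer v v"] by simp
    have "FF A w X = (FF A (w+v) X' + FF A (w-v) X') / 2 + 2 * T A v v v v"
      unfolding FF_def b1 b2 using Tpm[OF S, of w v] outer_pm[of A w v X'] by (simp add: field_simps)
    then show ?thesis using h1 h2 pv by simp
  qed
qed

lemma outer_psd: "sym_psd (outer x x)"
  unfolding sym_psd_def
proof
  show "transpose (outer x x) = outer x x"
    by (simp add: vec_eq_iff transpose_def outer_def mult.commute)
  show "\<forall>v. 0 \<le> v \<bullet> (outer x x *v v)"
    by (simp add: outer_mv inner_commute)
qed

theorem theorem5p2:
  fixes A :: "real^'n^'n^'n^'n"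
  assumes "symmetric_tensor4 A"
  shows "(\<forall>x. 0 \<le> tensor4_form A x) \<longleftrightarrow> (\<forall>X. sym_psd X \<longrightarrow> 0 \<le> tensor4_matrix_form A X)"
proof
  assume P: "\<forall>x. 0 \<le> tensor4_form A x"
  show "\<forall>X. sym_psd X \<longrightarrow> 0 \<le> tensor4_matrix_form A X"
  proof (intro allI impI)
    fix X :: "real^'n^'n" assume "sym_psd X"
    from F_nonneg[OF assms _ this, of 0] P have "0 \<le> FF A 0 X" by (simp add: form_T)
    moreover have "T A 0 0 0 0 = 0" "outer (0::real^'n) 0 = 0"
      by (simp_all add: T_def outer_def vec_eq_iff)
    ultimately show "0 \<le> tensor4_matrix_form A X" unfolding FF_def mform_B by (simp add: B_zero)
  qed
next
  assume Q: "\<forall>X. sym_psd X \<longrightarrow> 0 \<le> tensor4_matrix_form A X"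
  show "\<forall>x. 0 \<le> tensor4_form A x"
    using Q outer_psd unfolding form_T mform_B by (metis B_outer)
qed

end
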